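(* Let $m,n,k,a$ be natural numbers with $n\geq 1$, $k\geq 1$, $m>1$ and $1\leq a\leq 9$. Then the equation $$B_nB_{n+1}\cdots B_{n+k} = a\left(\frac{10^m-1}{9}\right)$$ has no solution. That is, no product of two or more consecutive balancing numbers is a decimal repdigit with at least two digits.
   Context: The balancing sequence $(B_n)_{n\geq 0}$ is defined by $B_0=0$, $B_1=1$ and $B_{n+1}=6B_n-B_{n-1}$ for $n\geq 1$. For $1\le a\le 9$ and $m\ge 1$, the number $a\frac{10^m-1}{9}$ is the decimal integer consisting of $m$ copies of the digit $a$. *)

theory Defs
  imports Main
begin

text \<open>The balancing sequence: B 0 = 0, B 1 = 1, B (n+2) = 6 B (n+1) - B n.
  Defined over int to avoid truncated subtraction; all values are nonnegative.\<close>
fun balancing :: "nat \<Rightarrow> int" where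
  "balancing 0 = 0"
| "balancing (Suc 0) = 1"
| "balancing (Suc (Suc n)) = 6 * balancing (Suc n) - balancing n"

definition repdigit :: "nat \<Rightarrow> nat \<Rightarrow> int" where
  "repdigit a m = int a * ((10 ^ m - 1) div 9)"

end

theory Submission
  imports Defs
begin

definition tbl :: "int list" where
"tbl = [0, 1, 6, 35, 4, 89, 30, 91, 16, 5, 14, 79, 60, 81, 26, 75, 24, 69, 90, 71, 36, 45, 34, 59, 20, 61, 46, 15, 44, 49, 50, 51, 56, 85, 54, 39, 80, 41, 66, 55, 64, 29, 10, 31, 76, 25, 74, 19, 40, 21, 86, 95, 84, 9, 70, 11, 96, 65, 94, 99]"

lemma tbl_rec: "\<forall>j\<in>set [0..<60]. tbl ! ((j+2) mod 60) = (6 * tbl ! ((j+1) mod 60) - tbl ! j) mod 100"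
  by code_simp

lemma tbl_rec': "j < 60 \<Longrightarrow> tbl ! ((j+2) mod 60) = (6 * tbl ! ((j+1) mod 60) - tbl ! j) mod 100"
  using tbl_rec by auto

lemma lin_mod: "(6 * x - y) mod 100 = (6 * (x mod 100) - y mod 100) mod (100::int)"
proof -
  have "(6 * x - y) mod 100 = (6 * x mod 100 - y mod 100) mod 100" by (rule mod_diff_eq[symmetric])
  also have "6 * x mod 100 = (6 * (x mod 100)) mod 100" by (rule mod_mult_right_eq[symmetric])
  also have "((6 * (x mod 100)) mod 100 - y mod 100) mod 100 = (6 * (x mod 100) - y mod 100) mod 100"
    by (rule mod_diff_left_eq)
  finally show ?thesis .
qed

lemma bal_mod: "balancing n mod 100 = tbl ! (n mod 60)"
proof (induction n rule: balancing.induct)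
  case 1 then show ?case by (simp add: tbl_def)
next
  case 2 then show ?case by (simp add: tbl_def)
next
  case (3 n)
  have "balancing (Suc (Suc n)) mod 100 = (6 * (balancing (Suc n) mod 100) - balancing n mod 100) mod 100"
    using lin_mod by simp
  also have "\<dots> = (6 * tbl ! ((n mod 60 + 1) mod 60) - tbl ! (n mod 60)) mod 100"
    using 3 by (simp add: mod_Suc_eq)
  also have "\<dots> = tbl ! ((n mod 60 + 2) mod 60)"
    using tbl_rec'[of "n mod 60"] by simp
  also have "(n mod 60 + 2) mod 60 = Suc (Suc n) mod 60" by presburger
  finally show ?case .
qed

definition prl :: "nat \<Rightarrow> nat \<Rightarrow> int" where
"prl j k = prod_list (map (\<lambda>i. tbl ! ((j+i) mod 60)) [0..<Suc k])"

lemma check: "\<forall>j\<in>set [0..<60]. (\<forall>k\<in>set [1,2,3,4]. prl j k mod 100 \<notin> set [11,22,33,44,55,66,77,88,99]) \<and> prl j 5 mod 100 = 0"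
  unfolding prl_def by code_simp

lemma prl_eq: "prl j k = (\<Prod>i\<in>{0..k}. tbl ! ((j+i) mod 60))"
proof -
  have "{0..k} = set [0..<Suc k]" by auto
  moreover have "prod (\<lambda>i. tbl ! ((j+i) mod 60)) (set [0..<Suc k]) = prod_list (map (\<lambda>i. tbl ! ((j+i) mod 60)) [0..<Suc k])"
    by (rule prod.distinct_set_conv_list) simp
  ultimately show ?thesis unfolding prl_def by (simp only:)
qed

lemma nine_dvd: "(9::int) dvd 10^j - 1"
proof (induction j)
  case (Suc j)
  have "(10::int)^Suc j - 1 = 10 * (10^j - 1) + 9" by simp
  moreover have "(9::int) dvd 10 * (10^j - 1) + 9" using Suc by (intro dvd_add dvd_mult) auto
  ultimately show ?case by simp
qed simp

lemma rep_mod: assumes "m > 1" "a \<le> 9" shows "repdigit a m mod 100 = 11 * int a"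
proof -
  define j where "j = m - 2"
  have m: "m = j + 2" using assms unfolding j_def by arith
  obtain q where q: "(10::int)^j - 1 = 9 * q" using nine_dvd by (meson dvdE)
  have "(10::int)^m - 1 = 9 * (100 * q + 11)" using q unfolding m by (simp add: power_add algebra_simps)
  then have "((10::int)^m - 1) div 9 = 100 * q + 11" by simp
  then have "repdigit a m = 100 * (int a * q) + 11 * int a" unfolding repdigit_def by (simp add: algebra_simps)
  then show ?thesis using assms by simp
qed

theorem theorem2:
  fixes m n k a :: nat
  assumes "n \<ge> 1" and "k \<ge> 1" and "m > 1" and "1 \<le> a" and "a \<le> 9"
  shows "(\<Prod>i\<in>{n..n+k}. balancing i) \<noteq> repdigit a m"
proof
  assume eq: "(\<Prod>i\<in>{n..n+k}. balancing i) = repdigit a m"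
  define j where "j = n mod 60"
  have j: "j < 60" unfolding j_def by simp
  have P: "\<And>k. (\<Prod>i\<in>{n..n+k}. balancing i) mod 100 = prl j k mod 100"
  proof -
    fix k
    have "(\<Prod>i\<in>{n..n+k}. balancing i) mod 100 = (\<Prod>i\<in>{n..n+k}. balancing i mod 100) mod 100"
      by (simp add: mod_prod_eq)
    also have "\<dots> = (\<Prod>i\<in>{n..n+k}. tbl ! (i mod 60)) mod 100" by (simp add: bal_mod)
    also have "(\<Prod>i\<in>{n..n+k}. tbl ! (i mod 60)) = (\<Prod>i\<in>{0..k}. tbl ! ((i+n) mod 60))"
      using prod.shift_bounds_cl_nat_ivl[of "\<lambda>i. tbl ! (i mod 60)" 0 n k] by (simp add: add.commute)
    also have "\<dots> = (\<Prod>i\<in>{0..k}. tbl ! ((j+i) mod 60))"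
      unfolding j_def by (intro prod.cong refl) (metis add.commute mod_add_left_eq)
    finally show "(\<Prod>i\<in>{n..n+k}. balancing i) mod 100 = prl j k mod 100" by (simp add: prl_eq)
  qed
  have R: "repdigit a m mod 100 \<in> set [11,22,33,44,55,66,77,88,99]"
    using rep_mod[OF assms(3,5)] assms(4,5) by (auto simp: le_Suc_eq numeral_eq_Suc)
  show False
  proof (cases "k \<le> 4")
    case True
    then have "k \<in> set [1,2,3,4]" using assms(2) by auto
    then have "prl j k mod 100 \<notin> set [11,22,33,44,55,66,77,88,99]" using check j by auto
    then show False using P[of k] eq R by simp
  next
    case False
    define p where "p = k - 5"
    have kp: "k = 5 + p" using False unfolding p_def by arith
    have "(\<Prod>i\<in>{n..n+k}. balancing i) = (\<Prod>i\<in>{n..n+5}. balancing i) * (\<Prod>i\<in>{n+5+1..n+5+p}. balancing i)"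
      unfolding kp using prod.ub_add_nat[of n "n+5" balancing p] by (simp add: add.assoc)
    moreover have "(\<Prod>i\<in>{n..n+5}. balancing i) mod 100 = 0" using P[of 5] check j by auto
    ultimately have "(\<Prod>i\<in>{n..n+k}. balancing i) mod 100 = 0" by (metis mod_mult_left_eq mult_zero_left mod_0)
    then show False using eq R by auto
  qed
qed

end
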